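(* Let $K$ be a compact Lie group which is a maximal compact subgroup of a linear semisimple complex algebraic group, let $c\in K$ and let $(a,b)\in K\times K$ with $aba^{-1}b^{-1}=c$. If $a$ is generic, then the cyclic group generated by the Dehn twist $\tau_\alpha$, which acts on $\mathcal{H}(a,b)=\{a\}\times bK_a$ by $(a,b')\mapsto(a,b'a)$, acts ergodically on $\mathcal{H}(a,b)$ (with respect to the pushforward of Haar measure on $K_a$ under $\zeta\mapsto(a,b\zeta)$). Similarly, if $b$ is generic, then the cyclic group generated by the Dehn twist $\tau_\beta$ acts ergodically on $\mathcal{H}'(a,b)=aK_b\times\{b\}$ (with respect to the pushforward of Haar measure on $K_b$ under $\zeta\mapsto(a\zeta,b)$).
   Context: Here $\Sigma$ is the genus-one surface with one boundary component, $\pi_1(\Sigma)$ is free on simple loops $\alpha,\beta$ meeting once, and representations $\rho$ of $\pi_1(\Sigma)$ into $K$ are identified with pairs $(a,b)=(\rho(\alpha),\rho(\beta))$; the Dehn twist along $\alpha$ fixes $\alpha$ and sends $\beta$ to $\beta\alpha$, so acts by $(a,b)\mapsto(a,ba)$, and the Dehn twist along $\beta$ acts analogously with the roles of $\alpha,\beta$ exchanged, preserving $aK_b\times\{b\}$ and acting on it as right multiplication of the first coordinate by $b^{\pm1}$. $K_x$ denotes the centralizer of $x$ in $K$. An element $x\in K$ is generic if it is regular (its centralizer $K_x$ is a maximal torus) and the cyclic group $\langle x\rangle$ is dense in $K_x$. *)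

theory Defs
  imports "HOL-Analysis.Analysis" "HOL-Probability.Probability"
begin

type_synonym 'n cmat = "complex^'n^'n"

definition matrix_subgroup :: "('n::finite) cmat set \<Rightarrow> bool" where
  "matrix_subgroup S \<longleftrightarrow> S \<subseteq> {g. invertible g} \<and> mat 1 \<in> S \<and>
     (\<forall>x\<in>S. \<forall>y\<in>S. x ** y \<in> S) \<and> (\<forall>x\<in>S. matrix_inv x \<in> S)"

inductive_set poly_fun :: "(('n::finite) cmat \<Rightarrow> complex) set" where
  pconst: "(\<lambda>g. c) \<in> poly_fun"
| pcoord: "(\<lambda>g. g $ i $ j) \<in> poly_fun"
| padd: "p \<in> poly_fun \<Longrightarrow> q \<in> poly_fun \<Longrightarrow> (\<lambda>g. p g + q g) \<in> poly_fun"
| pmult: "p \<in> poly_fun \<Longrightarrow> q \<in> poly_fun \<Longrightarrow> (\<lambda>g. p g * q g) \<in> poly_fun"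

definition linear_algebraic_group :: "('n::finite) cmat set \<Rightarrow> bool" where
  "linear_algebraic_group G \<longleftrightarrow> matrix_subgroup G \<and>
     (\<exists>P \<subseteq> poly_fun. G = {g. invertible g \<and> (\<forall>p\<in>P. p g = 0)})"

definition lie_algebra :: "('n::finite) cmat set \<Rightarrow> 'n cmat set" where
  "lie_algebra G = {X. \<exists>\<gamma>::real \<Rightarrow> 'n cmat. \<gamma> 0 = mat 1 \<and> (\<forall>t. \<gamma> t \<in> G) \<and>
                       (\<gamma> has_vector_derivative X) (at 0)}"

definition lie_bracket :: "('n::finite) cmat \<Rightarrow> 'n cmat \<Rightarrow> 'n cmat" where
  "lie_bracket X Y = X ** Y - Y ** X"

definition lie_ideal :: "('n::finite) cmat set \<Rightarrow> 'n cmat set \<Rightarrow> bool" where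
  "lie_ideal g I \<longleftrightarrow> subspace I \<and> I \<subseteq> g \<and> (\<forall>X\<in>g. \<forall>Y\<in>I. lie_bracket X Y \<in> I)"

text \<open>A Lie algebra is semisimple iff it has no nonzero abelian ideal
  (equivalently: its radical is zero).\<close>
definition semisimple_lie_algebra :: "('n::finite) cmat set \<Rightarrow> bool" where
  "semisimple_lie_algebra g \<longleftrightarrow>
     (\<forall>I. lie_ideal g I \<and> (\<forall>X\<in>I. \<forall>Y\<in>I. lie_bracket X Y = 0) \<longrightarrow> I = {0})"

definition semisimple_algebraic_group :: "('n::finite) cmat set \<Rightarrow> bool" where
  "semisimple_algebraic_group G \<longleftrightarrow> linear_algebraic_group G \<and> connected G \<and>
     semisimple_lie_algebra (lie_algebra G)"

definition maximal_compact_subgroup :: "('n::finite) cmat set \<Rightarrow> 'n cmat set \<Rightarrow> bool" where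
  "maximal_compact_subgroup G K \<longleftrightarrow> matrix_subgroup K \<and> compact K \<and> K \<subseteq> G \<and>
     (\<forall>K'. matrix_subgroup K' \<and> compact K' \<and> K \<subseteq> K' \<and> K' \<subseteq> G \<longrightarrow> K' = K)"

definition centralizer :: "('n::finite) cmat set \<Rightarrow> 'n cmat \<Rightarrow> 'n cmat set" where
  "centralizer K x = {k \<in> K. k ** x = x ** k}"

definition torus_in :: "('n::finite) cmat set \<Rightarrow> 'n cmat set \<Rightarrow> bool" where
  "torus_in K T \<longleftrightarrow> matrix_subgroup T \<and> T \<subseteq> K \<and> compact T \<and> connected T \<and>
     (\<forall>x\<in>T. \<forall>y\<in>T. x ** y = y ** x)"

definition maximal_torus :: "('n::finite) cmat set \<Rightarrow> 'n cmat set \<Rightarrow> bool" where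
  "maximal_torus K T \<longleftrightarrow> torus_in K T \<and> (\<forall>T'. torus_in K T' \<and> T \<subseteq> T' \<longrightarrow> T' = T)"

primrec mpow :: "('n::finite) cmat \<Rightarrow> nat \<Rightarrow> 'n cmat" where
  "mpow x 0 = mat 1"
| "mpow x (Suc k) = x ** mpow x k"

definition cyclic_group :: "('n::finite) cmat \<Rightarrow> 'n cmat set" where
  "cyclic_group x = range (mpow x) \<union> range (mpow (matrix_inv x))"

definition regular :: "('n::finite) cmat set \<Rightarrow> 'n cmat \<Rightarrow> bool" where
  "regular K x \<longleftrightarrow> maximal_torus K (centralizer K x)"

definition generic :: "('n::finite) cmat set \<Rightarrow> 'n cmat \<Rightarrow> bool" where
  "generic K x \<longleftrightarrow> x \<in> K \<and> regular K x \<and> closure (cyclic_group x) = centralizer K x"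

definition haar_measure :: "('n::finite) cmat set \<Rightarrow> 'n cmat measure \<Rightarrow> bool" where
  "haar_measure H \<mu> \<longleftrightarrow> prob_space \<mu> \<and> space \<mu> = H \<and>
     sets \<mu> = sets (restrict_space borel H) \<and>
     (\<forall>g\<in>H. \<forall>A\<in>sets \<mu>. emeasure \<mu> ((\<lambda>z. g ** z) ` A) = emeasure \<mu> A)"

definition ergodic_cyclic :: "'a measure \<Rightarrow> ('a \<Rightarrow> 'a) \<Rightarrow> bool" where
  "ergodic_cyclic M T \<longleftrightarrow>
     (\<forall>A\<in>sets M. T ` A = A \<longrightarrow> emeasure M A = 0 \<or> emeasure M (space M - A) = 0)"

definition tau_alpha :: "('n::finite) cmat \<times> 'n cmat \<Rightarrow> 'n cmat \<times> 'n cmat" where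
  "tau_alpha p = (fst p, snd p ** fst p)"

definition tau_beta :: "('n::finite) cmat \<times> 'n cmat \<Rightarrow> 'n cmat \<times> 'n cmat" where
  "tau_beta p = (fst p ** snd p, snd p)"

definition leaf_alpha :: "('n::finite) cmat set \<Rightarrow> 'n cmat \<Rightarrow> 'n cmat \<Rightarrow> ('n cmat \<times> 'n cmat) set" where
  "leaf_alpha K a b = {a} \<times> ((\<lambda>z. b ** z) ` centralizer K a)"

definition leaf_beta :: "('n::finite) cmat set \<Rightarrow> 'n cmat \<Rightarrow> 'n cmat \<Rightarrow> ('n cmat \<times> 'n cmat) set" where
  "leaf_beta K a b = ((\<lambda>z. a ** z) ` centralizer K b) \<times> {b}"

end

theory Submission
  imports Defs
begin

lemma minv: "invertible (A::'n::finite cmat) \<Longrightarrow> A ** matrix_inv A = mat 1 \<and> matrix_inv A ** A = mat 1"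
  unfolding invertible_def matrix_inv_def by (rule someI_ex)

lemma mm_rdistrib: "((A::'n::finite cmat) + B) ** C = A ** C + B ** C"
  by (vector matrix_matrix_mult_def sum.distrib[symmetric] field_simps)

lemma mm_ldiff: "(A::'n::finite cmat) ** (B - C) = A ** B - A ** C"
  by (metis add_diff_cancel_right' diff_add_cancel matrix_add_ldistrib)

lemma mm_rdiff: "((A::'n::finite cmat) - B) ** C = A ** C - B ** C"
  by (metis add_diff_cancel_right' diff_add_cancel mm_rdistrib)

lemma mm_bilinear: "bilinear ((**) :: 'n::finite cmat \<Rightarrow> 'n cmat \<Rightarrow> 'n cmat)"
  unfolding bilinear_def linear_iff
  by (auto simp: matrix_add_ldistrib mm_rdistrib scalar_matrix_assoc matrix_scalar_ac)

lemma mm_bb: "bounded_bilinear ((**) :: 'n::finite cmat \<Rightarrow> 'n cmat \<Rightarrow> 'n cmat)"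
  using mm_bilinear bilinear_conv_bounded_bilinear by blast

lemma mm_cont: "continuous_on UNIV (\<lambda>p::'n::finite cmat \<times> 'n cmat. fst p ** snd p)"
  by (intro continuous_at_imp_continuous_on ballI bounded_bilinear.continuous[OF mm_bb] continuous_fst continuous_snd continuous_ident)

lemma mm_meas: "(\<lambda>p::'n::finite cmat \<times> 'n cmat. fst p ** snd p) \<in> borel_measurable borel"
  using mm_cont borel_measurable_continuous_onI by blast

lemma lmul_meas: "(\<lambda>x::'n::finite cmat. (g::'n cmat) ** x) \<in> borel_measurable borel"
proof -
  have "continuous_on UNIV (\<lambda>x::'n::finite cmat. g ** x)"
    proof -
    have "bounded_linear (\<lambda>x::'n cmat. g ** x)"
      by (rule bounded_bilinear.bounded_linear_right[OF mm_bb])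
    then show ?thesis by (rule linear_continuous_on)
  qed
  then show ?thesis using borel_measurable_continuous_onI by blast
qed

locale haar_grp =
  fixes T :: "('n::finite) cmat set" and \<mu> :: "'n cmat measure"
  assumes sub: "matrix_subgroup T" and cpt: "compact T"
    and comm: "\<And>x y. x \<in> T \<Longrightarrow> y \<in> T \<Longrightarrow> x ** y = y ** x"
    and haar: "haar_measure T \<mu>"
begin

lemma prob: "prob_space \<mu>" and spT: "space \<mu> = T" and setsT: "sets \<mu> = sets (restrict_space borel T)"
  and inv_meas: "\<And>g A. g \<in> T \<Longrightarrow> A \<in> sets \<mu> \<Longrightarrow> emeasure \<mu> ((\<lambda>z. g ** z) ` A) = emeasure \<mu> A"
  using haar unfolding haar_measure_def by auto

sublocale P: prob_space \<mu> by (rule prob)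

lemma T_borel: "T \<in> sets borel"
  using cpt by (simp add: borel_closed compact_imp_closed)

lemma sets_iff: "S \<in> sets \<mu> \<longleftrightarrow> S \<subseteq> T \<and> S \<in> sets borel"
  unfolding setsT using T_borel by (subst sets_restrict_space_iff) auto

lemma one_T: "mat 1 \<in> T" and mult_T: "x \<in> T \<Longrightarrow> y \<in> T \<Longrightarrow> x ** y \<in> T"
  and inv_T: "x \<in> T \<Longrightarrow> matrix_inv x \<in> T"
  and invl: "x \<in> T \<Longrightarrow> matrix_inv x ** x = mat 1"
  and invr: "x \<in> T \<Longrightarrow> x ** matrix_inv x = mat 1"
  using sub minv unfolding matrix_subgroup_def by blast+

definition L :: "'n cmat \<Rightarrow> 'n cmat set \<Rightarrow> 'n cmat set" where
  "L g S = (\<lambda>z. g ** z) ` S"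

lemma L_pre: assumes "g \<in> T" "S \<subseteq> T"
  shows "L g S = (\<lambda>x. matrix_inv g ** x) -` S \<inter> T"
proof (rule set_eqI)
  fix x
  show "x \<in> L g S \<longleftrightarrow> x \<in> (\<lambda>x. matrix_inv g ** x) -` S \<inter> T"
  proof
    assume "x \<in> L g S"
    then obtain s where s: "s \<in> S" "x = g ** s" unfolding L_def by auto
    then have "x \<in> T" using assms mult_T by auto
    moreover have "matrix_inv g ** x = s" using s invl[OF assms(1)] by (simp add: matrix_mul_assoc)
    ultimately show "x \<in> (\<lambda>x. matrix_inv g ** x) -` S \<inter> T" using s by simp
  next
    assume x: "x \<in> (\<lambda>x. matrix_inv g ** x) -` S \<inter> T"
    have "x = g ** (matrix_inv g ** x)" using invr[OF assms(1)] by (simp add: matrix_mul_assoc)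
    then show "x \<in> L g S" using x unfolding L_def by blast
  qed
qed

lemma L_sets: assumes "g \<in> T" "S \<in> sets \<mu>" shows "L g S \<in> sets \<mu>"
proof -
  have ST: "S \<subseteq> T" "S \<in> sets borel" using assms sets_iff by auto
  have "(\<lambda>x. matrix_inv g ** x) -` S \<in> sets borel"
    using lmul_meas[of "matrix_inv g"] ST(2) by (metis measurable_sets_borel)
  then have "(\<lambda>x. matrix_inv g ** x) -` S \<inter> T \<in> sets borel"
    using T_borel by (rule sets.Int)
  moreover have "L g S \<subseteq> T" unfolding L_pre[OF assms(1) ST(1)] by blast
  ultimately show ?thesis unfolding sets_iff L_pre[OF assms(1) ST(1)] by simp
qed

lemma L_measure: assumes "g \<in> T" "S \<in> sets \<mu>" shows "measure \<mu> (L g S) = measure \<mu> S"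
  unfolding L_def measure_def by (subst inv_meas[OF assms]) (rule refl)

lemma L_diff: assumes "g \<in> T" shows "L g (S - S') = L g S - L g S'"
proof -
  have "inj ((**) g)"
  proof (rule injI)
    fix x y assume "g ** x = g ** y"
    then have "matrix_inv g ** (g ** x) = matrix_inv g ** (g ** y)" by simp
    then show "x = y" using invl[OF assms] by (simp add: matrix_mul_assoc)
  qed
  then show ?thesis unfolding L_def by (rule image_set_diff)
qed

lemma L_comp: "L g (L h S) = L (g ** h) S"
  unfolding L_def image_image by (simp add: matrix_mul_assoc)

lemma L_one: "L (mat 1) S = S"
  unfolding L_def by simp


definition nu :: "'n cmat measure" where "nu = distr \<mu> borel (\<lambda>x. x)"

lemma id_meas: "(\<lambda>x. x) \<in> measurable \<mu> borel"
proof -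
  have "(\<lambda>x. x) \<in> measurable (restrict_space borel T) borel"
    by (rule measurable_restrict_space1) simp
  then show ?thesis by (subst measurable_cong_sets[OF setsT refl])
qed

lemma sets_nu: "sets nu = sets borel"
  unfolding nu_def by simp

lemma emeasure_nu: "X \<in> sets borel \<Longrightarrow> emeasure nu X = emeasure \<mu> (X \<inter> T)"
  unfolding nu_def by (simp add: emeasure_distr[OF id_meas] spT)

lemma nu_fin: "emeasure nu (space nu) \<noteq> \<infinity>"
proof -
  have "space nu = UNIV" unfolding nu_def by simp
  then show ?thesis using emeasure_nu[of UNIV] by simp
qed

lemma inner_approx:
  assumes S: "S \<in> sets \<mu>" and e: "e > 0"
  shows "\<exists>C. compact C \<and> C \<subseteq> S \<and> measure \<mu> (S - C) < e"
proof (cases "measure \<mu> S < e")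
  case True
  then show ?thesis by (intro exI[of _ "{}"]) auto
next
  case False
  have ST: "S \<subseteq> T" "S \<in> sets borel" using S sets_iff by auto
  have "emeasure nu S = (SUP K \<in> {K. K \<subseteq> S \<and> compact K}. emeasure nu K)"
    by (rule inner_regular[OF sets_nu nu_fin ST(2)])
  moreover have "emeasure nu S = ennreal (measure \<mu> S)"
    using emeasure_nu[OF ST(2)] ST(1) P.emeasure_eq_measure by (simp add: Int_absorb2)
  moreover have "ennreal (measure \<mu> S - e) < ennreal (measure \<mu> S)"
    using False e by (simp add: ennreal_lessI)
  ultimately obtain K where K: "K \<subseteq> S" "compact K" "ennreal (measure \<mu> S - e) < emeasure nu K"
    by (auto simp: less_SUP_iff)
  have Kb: "K \<in> sets borel" using K(2) by (simp add: borel_compact)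
  have KS: "K \<in> sets \<mu>" using K(1) ST(1) Kb sets_iff by auto
  have "emeasure nu K = ennreal (measure \<mu> K)"
    using emeasure_nu[OF Kb] K(1) ST(1) P.emeasure_eq_measure by (metis Int_absorb2 order_trans)
  moreover have "0 \<le> measure \<mu> S - e" using False by simp
  ultimately have "measure \<mu> S - e < measure \<mu> K" using K(3)
    by (simp add: ennreal_less_iff)
  then have "measure \<mu> (S - K) < e"
    using P.finite_measure_Diff[OF S KS K(1)] by simp
  then show ?thesis using K by blast
qed

lemma outer_approx:
  assumes S: "S \<in> sets \<mu>" and e: "e > 0"
  shows "\<exists>U. open U \<and> S \<subseteq> U \<and> measure \<mu> (U \<inter> T - S) < e"
proof -
  have ST: "S \<subseteq> T" "S \<in> sets borel" using S sets_iff by auto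
  have "emeasure nu S = (INF U \<in> {U. S \<subseteq> U \<and> open U}. emeasure nu U)"
    by (rule outer_regular[OF sets_nu nu_fin ST(2)])
  moreover have "emeasure nu S = ennreal (measure \<mu> S)"
    using emeasure_nu[OF ST(2)] ST(1) P.emeasure_eq_measure by (simp add: Int_absorb2)
  moreover have "ennreal (measure \<mu> S) < ennreal (measure \<mu> S + e)"
    using e by (simp add: ennreal_lessI)
  ultimately obtain U where U: "S \<subseteq> U" "open U" "emeasure nu U < ennreal (measure \<mu> S + e)"
    by (auto simp: INF_less_iff)
  have Ub: "U \<in> sets borel" using U(2) by simp
  have UT: "U \<inter> T \<in> sets \<mu>" using Ub T_borel sets_iff by auto
  have "emeasure nu U = ennreal (measure \<mu> (U \<inter> T))"
    using emeasure_nu[OF Ub] P.emeasure_eq_measure by simp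
  then have "measure \<mu> (U \<inter> T) < measure \<mu> S + e" using U(3)
    by (simp add: ennreal_less_iff)
  moreover have "measure \<mu> (U \<inter> T - S) = measure \<mu> (U \<inter> T) - measure \<mu> S"
    using P.finite_measure_Diff[OF UT S] U(1) ST(1) by auto
  ultimately show ?thesis using U by auto
qed


lemma approx_translate:
  assumes S: "S \<in> sets \<mu>" and e: "e > 0"
  shows "\<exists>\<eta>>0. \<forall>g\<in>T. \<forall>g'\<in>T. dist g g' < \<eta> \<longrightarrow> measure \<mu> (L g S - L g' S) < e"
proof -
  have ST: "S \<subseteq> T" using S sets_iff by auto
  obtain C where C: "compact C" "C \<subseteq> S" "measure \<mu> (S - C) < e/2"
    using inner_approx[OF S, of "e/2"] e by auto
  have Cs: "C \<in> sets \<mu>" using C ST sets_iff borel_compact by auto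
  obtain U where U: "open U" "C \<subseteq> U" "measure \<mu> (U \<inter> T - C) < e/2"
    using outer_approx[OF Cs, of "e/2"] e by auto
  obtain \<delta> where \<delta>: "\<delta> > 0" "(\<Union>x\<in>C. ball x \<delta>) \<subseteq> U"
    by (rule compact_subset_open_imp_ball_epsilon_subset[OF C(1) U(1) U(2)])
  obtain K where K0: "K > 0" "\<forall>(x::'n cmat) (y::'n cmat). norm (x ** y) \<le> norm x * norm y * K"
    using bounded_bilinear.pos_bounded[OF mm_bb] by auto
  have K: "K > 0" "\<And>(x::'n cmat) (y::'n cmat). norm (x ** y) \<le> norm x * norm y * K" using K0 by auto
  obtain R where R: "R > 0" "\<And>x. x \<in> T \<Longrightarrow> norm x \<le> R"
    using compact_imp_bounded[OF cpt] unfolding bounded_pos by auto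
  define \<eta> where "\<eta> = \<delta> / (R*R*K*K)"
  have RK: "R*R*K*K > 0" using R K by simp
  have \<eta>: "\<eta> > 0" using \<delta> RK by (simp add: \<eta>_def)
  have SC: "S - C \<in> sets \<mu>" using S Cs by auto
  have UT: "U \<inter> T \<in> sets \<mu>" using U(1) T_borel sets_iff by auto
  have UC: "U \<inter> T - C \<in> sets \<mu>" using UT Cs by auto
  show ?thesis
  proof (intro exI[of _ \<eta>] conjI \<eta> ballI impI)
    fix g g' assume g: "g \<in> T" "g' \<in> T" and gg: "dist g g' < \<eta>"
    have sub: "L g C \<subseteq> L g' (U \<inter> T)"
    proof
      fix x assume "x \<in> L g C"
      then obtain c where c: "c \<in> C" "x = g ** c" by (auto simp: L_def)
      define y where "y = matrix_inv g' ** (g ** c)"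
      have cT: "c \<in> T" using c C ST by auto
      have yT: "y \<in> T" unfolding y_def using g cT mult_T inv_T by blast
      have "matrix_inv g' ** (g' ** c) = c"
        using invl[OF g(2)] by (simp add: matrix_mul_assoc)
      then have yc: "y - c = matrix_inv g' ** ((g - g') ** c)"
        unfolding y_def by (simp add: mm_ldiff mm_rdiff)
      have "norm (y - c) \<le> norm (matrix_inv g') * norm ((g - g') ** c) * K"
        unfolding yc by (rule K(2))
      also have "\<dots> \<le> R * (norm (g - g') * norm c * K) * K"
        using K R(1) R(2)[OF inv_T[OF g(2)]] K(2)[of "g - g'" c]
        by (intro mult_right_mono mult_mono) auto
      also have "\<dots> \<le> R * (norm (g - g') * R * K) * K"
        using K R(2)[OF cT] R
        by (intro mult_right_mono mult_left_mono) auto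
      also have "\<dots> = (R*R*K*K) * norm (g - g')" by (simp add: algebra_simps)
      also have "\<dots> < (R*R*K*K) * \<eta>"
        using gg RK unfolding dist_norm by (rule mult_strict_left_mono)
      also have "\<dots> = \<delta>" proof -
        have "\<And>c d::real. c > 0 \<Longrightarrow> c * (d / c) = d" by simp
        then show ?thesis using RK unfolding \<eta>_def by blast
      qed
      finally have "y \<in> ball c \<delta>" by (simp add: dist_norm norm_minus_commute)
      then have "y \<in> U" using \<delta>(2) c(1) by blast
      moreover have "x = g' ** y"
        using invr[OF g(2)] c(2) by (simp add: y_def matrix_mul_assoc)
      ultimately show "x \<in> L g' (U \<inter> T)" using yT by (auto simp: L_def)
    qed
    have "L g S - L g' S \<subseteq> L g (S - C) \<union> L g' (U \<inter> T - C)"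
    proof
      fix x assume x: "x \<in> L g S - L g' S"
      show "x \<in> L g (S - C) \<union> L g' (U \<inter> T - C)"
      proof (cases "x \<in> L g C")
        case True
        then have "x \<in> L g' (U \<inter> T)" using sub by blast
        moreover have "x \<notin> L g' C" using x C(2) by (auto simp: L_def)
        ultimately show ?thesis using L_diff[OF g(2)] by blast
      next
        case False
        then show ?thesis using x L_diff[OF g(1)] by blast
      qed
    qed
    then have "measure \<mu> (L g S - L g' S) \<le> measure \<mu> (L g (S - C) \<union> L g' (U \<inter> T - C))"
      using L_sets[OF g(1) SC] L_sets[OF g(2) UC] by (intro P.finite_measure_mono) auto
    also have "\<dots> \<le> measure \<mu> (L g (S - C)) + measure \<mu> (L g' (U \<inter> T - C))"
      using L_sets[OF g(1) SC] L_sets[OF g(2) UC] by (rule measure_Un_le)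
    also have "\<dots> = measure \<mu> (S - C) + measure \<mu> (U \<inter> T - C)"
      using L_measure[OF g(1) SC] L_measure[OF g(2) UC] by simp
    also have "\<dots> < e" using C(3) U(3) by simp
    finally show "measure \<mu> (L g S - L g' S) < e" .
  qed
qed


lemma L_pow: "L x S = S \<Longrightarrow> L (mpow x n) S = S"
  by (induction n) (simp_all add: L_one L_comp[symmetric])

lemma mpow_T: "x \<in> T \<Longrightarrow> mpow x n \<in> T"
  by (induction n) (simp_all add: one_T mult_T)

lemma cyc_T: "x \<in> T \<Longrightarrow> cyclic_group x \<subseteq> T"
  unfolding cyclic_group_def using mpow_T inv_T by blast

lemma L_cyc: assumes "a \<in> T" "L a S = S" "h \<in> cyclic_group a" shows "L h S = S"
proof -
  have "L (matrix_inv a) S = L (matrix_inv a) (L a S)" using assms by simp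
  also have "\<dots> = S" using invl[OF assms(1)] by (simp add: L_comp L_one)
  finally have "L (matrix_inv a) S = S" .
  then show ?thesis using assms L_pow unfolding cyclic_group_def by blast
qed

lemma invariant_all:
  assumes a: "a \<in> T" "closure (cyclic_group a) = T" and S: "S \<in> sets \<mu>" and aS: "L a S = S"
    and g: "g \<in> T"
  shows "measure \<mu> (L g S - S) = 0"
proof -
  have "measure \<mu> (L g S - S) < e" if e: "e > 0" for e
  proof -
    obtain \<eta> where \<eta>: "\<eta> > 0" "\<forall>g\<in>T. \<forall>g'\<in>T. dist g g' < \<eta> \<longrightarrow> measure \<mu> (L g S - L g' S) < e"
      using approx_translate[OF S e] by blast
    have "g \<in> closure (cyclic_group a)" using a g by simp
    then obtain h where h: "h \<in> cyclic_group a" "dist g h < \<eta>"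
      using closure_approachableD[OF _ \<eta>(1)] by blast
    have hT: "h \<in> T" using h(1) cyc_T[OF a(1)] by blast
    have "L h S = S" using L_cyc[OF a(1) aS h(1)] .
    then show ?thesis using \<eta>(2) g hT h(2) by metis
  qed
  then have "measure \<mu> (L g S - S) \<le> 0"
    by (metis less_le_not_le not_le_imp_less)
  then show ?thesis using measure_nonneg[of \<mu> "L g S - S"] by linarith
qed


lemma L_inv_char: assumes g: "g \<in> T" and ST: "S \<subseteq> T"
  shows "L (matrix_inv g) S = {x \<in> T. g ** x \<in> S}"
proof (rule set_eqI)
  fix x
  show "x \<in> L (matrix_inv g) S \<longleftrightarrow> x \<in> {x \<in> T. g ** x \<in> S}"
  proof
    assume "x \<in> L (matrix_inv g) S"
    then obtain s where s: "s \<in> S" "x = matrix_inv g ** s" unfolding L_def by auto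
    then have "x \<in> T" using ST g mult_T inv_T by blast
    moreover have "g ** x = s" using s invr[OF g] by (simp add: matrix_mul_assoc)
    ultimately show "x \<in> {x \<in> T. g ** x \<in> S}" using s by simp
  next
    assume x: "x \<in> {x \<in> T. g ** x \<in> S}"
    have "x = matrix_inv g ** (g ** x)" using invl[OF g] by (simp add: matrix_mul_assoc)
    then show "x \<in> L (matrix_inv g) S" using x unfolding L_def by blast
  qed
qed

lemma fubini_step:
  assumes S: "S \<in> sets \<mu>" and inv: "\<And>g. g \<in> T \<Longrightarrow> measure \<mu> (L g S - S) = 0"
  shows "emeasure \<mu> S = 0 \<or> emeasure \<mu> (T - S) = 0"
proof -
  interpret PP: pair_prob_space \<mu> \<mu> by (simp add: pair_prob_space_def pair_sigma_finite_def prob prob_space_imp_sigma_finite)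
  have ST: "S \<subseteq> T" "S \<in> sets borel" using S sets_iff by auto
  have TS: "T - S \<in> sets \<mu>" using S spT by (metis sets.compl_sets)
  have m1: "(\<lambda>p. p) \<in> measurable (\<mu> \<Otimes>\<^sub>M \<mu>) (borel \<Otimes>\<^sub>M borel)"
    unfolding measurable_pair_iff comp_def
    by (intro conjI measurable_compose[OF measurable_fst id_meas] measurable_compose[OF measurable_snd id_meas])
  have mm: "(\<lambda>p. fst p ** snd p) \<in> borel_measurable (\<mu> \<Otimes>\<^sub>M \<mu>)"
    using measurable_compose[OF m1[unfolded borel_prod] mm_meas] by simp
  have sp: "space (\<mu> \<Otimes>\<^sub>M \<mu>) = T \<times> T" by (simp add: space_pair_measure spT)
  define E where "E = ((\<lambda>p. fst p ** snd p) -` S \<inter> space (\<mu> \<Otimes>\<^sub>M \<mu>)) \<inter> (snd -` (T - S) \<inter> space (\<mu> \<Otimes>\<^sub>M \<mu>))"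
  have E: "E \<in> sets (\<mu> \<Otimes>\<^sub>M \<mu>)"
    unfolding E_def
    by (intro sets.Int measurable_sets[OF mm ST(2)] measurable_sets[OF measurable_snd TS])
  have E_eq: "E = {p. fst p \<in> T \<and> snd p \<in> T \<and> fst p ** snd p \<in> S \<and> snd p \<notin> S}"
    unfolding E_def sp by auto
  have "emeasure (\<mu> \<Otimes>\<^sub>M \<mu>) E = (\<integral>\<^sup>+g. emeasure \<mu> (Pair g -` E) \<partial>\<mu>)"
    by (rule P.emeasure_pair_measure_alt[OF E])
  also have "\<dots> = (\<integral>\<^sup>+g. 0 \<partial>\<mu>)"
  proof (rule nn_integral_cong)
    fix g assume "g \<in> space \<mu>"
    then have g: "g \<in> T" using spT by simp
    have "Pair g -` E = L (matrix_inv g) S - S"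
      unfolding E_eq L_inv_char[OF g ST(1)] using g by auto
    moreover have "L (matrix_inv g) S - S \<in> sets \<mu>" using L_sets[OF inv_T[OF g] S] S by auto
    ultimately show "emeasure \<mu> (Pair g -` E) = 0"
      using inv[OF inv_T[OF g]] P.emeasure_eq_measure by simp
  qed
  also have "\<dots> = 0" by simp
  finally have E0: "emeasure (\<mu> \<Otimes>\<^sub>M \<mu>) E = 0" .
  have "emeasure (\<mu> \<Otimes>\<^sub>M \<mu>) E = (\<integral>\<^sup>+x. emeasure \<mu> ((\<lambda>g. (g, x)) -` E) \<partial>\<mu>)"
    by (rule PP.emeasure_pair_measure_alt2[OF E])
  also have "\<dots> = (\<integral>\<^sup>+x. emeasure \<mu> S * indicator (T - S) x \<partial>\<mu>)"
  proof (rule nn_integral_cong)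
    fix x assume "x \<in> space \<mu>"
    then have x: "x \<in> T" using spT by simp
    show "emeasure \<mu> ((\<lambda>g. (g, x)) -` E) = emeasure \<mu> S * indicator (T - S) x"
    proof (cases "x \<in> S")
      case True
      then have "(\<lambda>g. (g, x)) -` E = {}" unfolding E_eq by auto
      then show ?thesis using True by simp
    next
      case False
      have "(\<lambda>g. (g, x)) -` E = {g \<in> T. x ** g \<in> S}"
        unfolding E_eq using False x comm by auto
      also have "\<dots> = L (matrix_inv x) S" using L_inv_char[OF x ST(1)] by simp
      finally have "emeasure \<mu> ((\<lambda>g. (g, x)) -` E) = emeasure \<mu> S"
        using inv_meas[OF inv_T[OF x] S] unfolding L_def by simp
      then show ?thesis using False x by simp
    qed
  qed
  also have "\<dots> = emeasure \<mu> S * emeasure \<mu> (T - S)"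
    by (rule nn_integral_cmult_indicator[OF TS])
  finally have "emeasure \<mu> S * emeasure \<mu> (T - S) = 0" using E0 by simp
  then show ?thesis by simp
qed

lemma ergodic_core:
  assumes a: "a \<in> T" "closure (cyclic_group a) = T" and S: "S \<in> sets \<mu>" and aS: "L a S = S"
  shows "emeasure \<mu> S = 0 \<or> emeasure \<mu> (T - S) = 0"
  using fubini_step[OF S invariant_all[OF a S aS]] .


lemma leaf_ergodic:
  fixes P :: "'n cmat \<Rightarrow> 'n cmat \<times> 'n cmat" and tau and x y :: "'n cmat"
  assumes x: "x \<in> T" "closure (cyclic_group x) = T" and y: "invertible y"
    and Pc: "continuous_on UNIV P" and Pinj: "inj P"
    and tauP: "\<And>u. tau (P u) = P (u ** x)"
  shows "ergodic_cyclic (distr \<mu> (restrict_space borel ((\<lambda>z. P (y ** z)) ` T)) (\<lambda>z. P (y ** z))) tau"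
proof -
  define f where "f = (\<lambda>z. P (y ** z))"
  define Lf where "Lf = f ` T"
  define M where "M = distr \<mu> (restrict_space borel Lf) f"
  have fc: "continuous_on UNIV f"
  proof -
    have "continuous_on UNIV (\<lambda>z::'n cmat. y ** z)"
      using bounded_bilinear.bounded_linear_right[OF mm_bb] by (rule linear_continuous_on)
    then show ?thesis unfolding f_def
      using continuous_on_compose2[OF Pc] by blast
  qed
  have fb: "f \<in> measurable \<mu> borel"
    using measurable_compose[OF id_meas borel_measurable_continuous_onI[OF fc]] by simp
  have fm: "f \<in> measurable \<mu> (restrict_space borel Lf)"
    by (rule measurable_restrict_space2) (auto simp: spT Lf_def fb)
  have setsM: "sets M = sets (restrict_space borel Lf)" unfolding M_def by simp
  have spM: "space M = Lf" unfolding M_def by (simp add: space_restrict_space)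
  show ?thesis
    unfolding ergodic_cyclic_def f_def[symmetric] Lf_def[symmetric] M_def[symmetric]
  proof (intro ballI impI)
    fix A assume A: "A \<in> sets M" and tA: "tau ` A = A"
    have AL: "A \<subseteq> Lf" using sets.sets_into_space[OF A] spM by simp
    have A': "A \<in> sets (restrict_space borel Lf)" using A setsM by simp
    define B where "B = f -` A \<inter> T"
    have Bs: "B \<in> sets \<mu>" unfolding B_def using measurable_sets[OF fm A'] spT by simp
    have BT: "B \<subseteq> T" unfolding B_def by auto
    have eA: "emeasure M A = emeasure \<mu> B"
      unfolding M_def B_def using emeasure_distr[OF fm A'] spT by simp
    have LA: "Lf - A \<in> sets (restrict_space borel Lf)"
      using sets.compl_sets[OF A'] by (simp add: space_restrict_space)
    have "f -` (Lf - A) \<inter> T = T - B" unfolding B_def Lf_def by auto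
    then have eLA: "emeasure M (space M - A) = emeasure \<mu> (T - B)"
      unfolding M_def spM[unfolded M_def] using emeasure_distr[OF fm LA] spT by simp
    have yinv: "matrix_inv y ** y = mat 1" using minv[OF y] by simp
    have "L x B = B"
    proof
      show "L x B \<subseteq> B"
      proof
        fix w assume "w \<in> L x B"
        then obtain z where z: "z \<in> B" "w = x ** z" unfolding L_def by auto
        have zT: "z \<in> T" and fz: "f z \<in> A" using z unfolding B_def by auto
        have "tau (f z) \<in> A" using fz tA by blast
        moreover have "tau (f z) = f w"
          unfolding f_def tauP z(2) using comm[OF x(1) zT] by (simp add: matrix_mul_assoc)
        ultimately show "w \<in> B" unfolding B_def using mult_T[OF x(1) zT] z(2) by simp
      qed
    next
      show "B \<subseteq> L x B"
      proof
        fix z assume z: "z \<in> B"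
        then have zT: "z \<in> T" and "f z \<in> A" unfolding B_def by auto
        then obtain p where p: "p \<in> A" "f z = tau p" using tA by blast
        then obtain w where w: "w \<in> T" "p = f w" using AL unfolding Lf_def by blast
        have "P (y ** z) = P (y ** w ** x)" using p(2) w(2) tauP unfolding f_def by simp
        then have "y ** z = y ** (w ** x)" using Pinj by (simp add: inj_eq matrix_mul_assoc)
        then have "matrix_inv y ** (y ** z) = matrix_inv y ** (y ** (w ** x))" by simp
        then have "z = w ** x" using yinv by (simp add: matrix_mul_assoc)
        then have "z = x ** w" using comm[OF w(1) x(1)] by simp
        moreover have "w \<in> B" unfolding B_def using w p by simp
        ultimately show "z \<in> L x B" unfolding L_def by blast
      qed
    qed
    then have "emeasure \<mu> B = 0 \<or> emeasure \<mu> (T - B) = 0"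
      by (rule ergodic_core[OF x Bs])
    then show "emeasure M A = 0 \<or> emeasure M (space M - A) = 0"
      using eA eLA by simp
  qed
qed

end

lemma generic_haar_grp:
  assumes "generic K x" "haar_measure (centralizer K x) \<mu>"
  shows "haar_grp (centralizer K x) \<mu>" "x \<in> centralizer K x"
    "closure (cyclic_group x) = centralizer K x"
proof -
  have t: "torus_in K (centralizer K x)" and xK: "x \<in> K"
    and c: "closure (cyclic_group x) = centralizer K x"
    using assms(1) unfolding generic_def regular_def maximal_torus_def by auto
  show "haar_grp (centralizer K x) \<mu>"
    using t assms(2) unfolding torus_in_def haar_grp_def by auto
  show "x \<in> centralizer K x" using xK unfolding centralizer_def by simp
  show "closure (cyclic_group x) = centralizer K x" by (rule c)
qed

theorem corollary5p3:
  fixes G K :: "('n::finite) cmat set" and a b c :: "'n cmat"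
  assumes "semisimple_algebraic_group G"
    and "maximal_compact_subgroup G K"
    and "c \<in> K" and "a \<in> K" and "b \<in> K"
    and "a ** b ** matrix_inv a ** matrix_inv b = c"
  shows "(generic K a \<longrightarrow> (\<forall>\<mu>. haar_measure (centralizer K a) \<mu> \<longrightarrow>
           ergodic_cyclic (distr \<mu> (restrict_space borel (leaf_alpha K a b)) (\<lambda>z. (a, b ** z)))
                          tau_alpha)) \<and>
         (generic K b \<longrightarrow> (\<forall>\<mu>. haar_measure (centralizer K b) \<mu> \<longrightarrow>
           ergodic_cyclic (distr \<mu> (restrict_space borel (leaf_beta K a b)) (\<lambda>z. (a ** z, b)))
                          tau_beta))"
proof (intro conjI impI allI)
  have Ksub: "matrix_subgroup K" using assms(2) unfolding maximal_compact_subgroup_def by simp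
  then have ia: "invertible a" and ib: "invertible b"
    using assms(4,5) unfolding matrix_subgroup_def by auto
  fix \<mu>
  {
    assume g: "generic K a" and h: "haar_measure (centralizer K a) \<mu>"
    interpret haar_grp "centralizer K a" \<mu> by (rule generic_haar_grp[OF g h])
    have "ergodic_cyclic (distr \<mu> (restrict_space borel ((\<lambda>z. (\<lambda>u. (a, u)) (b ** z)) ` centralizer K a))
            (\<lambda>z. (\<lambda>u. (a, u)) (b ** z))) tau_alpha"
      by (rule leaf_ergodic[OF generic_haar_grp(2,3)[OF g h] ib])
         (auto intro: continuous_intros simp: inj_def tau_alpha_def)
    moreover have "(\<lambda>z. (a, b ** z)) ` centralizer K a = leaf_alpha K a b"
      unfolding leaf_alpha_def by auto
    ultimately show "ergodic_cyclic (distr \<mu> (restrict_space borel (leaf_alpha K a b)) (\<lambda>z. (a, b ** z)))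
                          tau_alpha" by simp
  }
  {
    assume g: "generic K b" and h: "haar_measure (centralizer K b) \<mu>"
    interpret haar_grp "centralizer K b" \<mu> by (rule generic_haar_grp[OF g h])
    have "ergodic_cyclic (distr \<mu> (restrict_space borel ((\<lambda>z. (\<lambda>u. (u, b)) (a ** z)) ` centralizer K b))
            (\<lambda>z. (\<lambda>u. (u, b)) (a ** z))) tau_beta"
      by (rule leaf_ergodic[OF generic_haar_grp(2,3)[OF g h] ia])
         (auto intro: continuous_intros simp: inj_def tau_beta_def)
    moreover have "(\<lambda>z. (a ** z, b)) ` centralizer K b = leaf_beta K a b"
      unfolding leaf_beta_def by auto
    ultimately show "ergodic_cyclic (distr \<mu> (restrict_space borel (leaf_beta K a b)) (\<lambda>z. (a ** z, b)))
                          tau_beta" by simp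
  }
qed

end
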